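(* $\mathcal{A}(\bm{p})$ is a Hermite ring, i.e. every finitely generated stably free $\mathcal{A}(\bm{p})$-module is free. Equivalently, for all $k<K$ in $\mathbb{N}$ and every $f\in\mathcal{A}(\bm{p})^{K\times k}$ admitting $g\in\mathcal{A}(\bm{p})^{k\times K}$ with $g\ast f=I_k$, there exist $f_c\in\mathcal{A}(\bm{p})^{K\times(K-k)}$ and $G\in\mathcal{A}(\bm{p})^{K\times K}$ with $G\ast[f\ \ f_c]=I_K$.
   Context: Fix $\bm{p}:\mathbb{N}_0\to(0,\infty)$ with $\lim_{n\to\infty}\bm{p}(n)^{1/n}=\infty$. For an entire function $f$ write $f(z)=\sum_{n\ge0}\widehat f(n)z^n$. $\mathcal{A}(\bm{p})$ is the set of entire functions $f$ with $\sup_{n\ge 0}\bm{p}(n)|\widehat f(n)|<\infty$, with pointwise addition and scalar multiplication, the weighted Hadamard product $(f\ast g)(z)=\sum_{n\ge0}\bm{p}(n)\widehat f(n)\widehat g(n)z^n$, and norm $\|f\|=\sup_{n\ge0}\bm{p}(n)|\widehat f(n)|$. It is a commutative unital ring with unit $\varepsilon(z)=\sum_{n\ge0}\frac{z^n}{\bm{p}(n)}$; matrix products use $\ast$ and $I_k$ is the $k\times k$ diagonal matrix with diagonal entries $\varepsilon$. *)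

theory Defs
  imports "HOL-Analysis.Analysis"
begin

definition tcoeff :: "(complex \<Rightarrow> complex) \<Rightarrow> nat \<Rightarrow> complex" where
  "tcoeff f n = (deriv ^^ n) f 0 / of_nat (fact n)"

definition Ap :: "(nat \<Rightarrow> real) \<Rightarrow> (complex \<Rightarrow> complex) set" where
  "Ap p = {f. f holomorphic_on UNIV \<and> bdd_above (range (\<lambda>n. p n * norm (tcoeff f n)))}"

definition hmul :: "(nat \<Rightarrow> real) \<Rightarrow> (complex \<Rightarrow> complex) \<Rightarrow> (complex \<Rightarrow> complex) \<Rightarrow> (complex \<Rightarrow> complex)" where
  "hmul p f g = (\<lambda>z. \<Sum>n. of_real (p n) * tcoeff f n * tcoeff g n * z ^ n)"

definition Ap_unit :: "(nat \<Rightarrow> real) \<Rightarrow> (complex \<Rightarrow> complex)" where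
  "Ap_unit p = (\<lambda>z. \<Sum>n. z ^ n / of_real (p n))"

definition Ap_mat :: "(nat \<Rightarrow> real) \<Rightarrow> nat \<Rightarrow> nat \<Rightarrow> (nat \<Rightarrow> nat \<Rightarrow> (complex \<Rightarrow> complex)) \<Rightarrow> bool" where
  "Ap_mat p r c A \<longleftrightarrow> (\<forall>i<r. \<forall>j<c. A i j \<in> Ap p)"

definition Ap_matmul :: "(nat \<Rightarrow> real) \<Rightarrow> nat \<Rightarrow> (nat \<Rightarrow> nat \<Rightarrow> (complex \<Rightarrow> complex))
    \<Rightarrow> (nat \<Rightarrow> nat \<Rightarrow> (complex \<Rightarrow> complex)) \<Rightarrow> nat \<Rightarrow> nat \<Rightarrow> (complex \<Rightarrow> complex)" where
  "Ap_matmul p m A B i j = (\<lambda>z. \<Sum>l<m. hmul p (A i l) (B l j) z)"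

definition Ap_is_id :: "(nat \<Rightarrow> real) \<Rightarrow> nat \<Rightarrow> (nat \<Rightarrow> nat \<Rightarrow> (complex \<Rightarrow> complex)) \<Rightarrow> bool" where
  "Ap_is_id p r A \<longleftrightarrow> (\<forall>i<r. \<forall>j<r. A i j = (if i = j then Ap_unit p else (\<lambda>_. 0)))"

definition hcat :: "nat \<Rightarrow> (nat \<Rightarrow> nat \<Rightarrow> 'a) \<Rightarrow> (nat \<Rightarrow> nat \<Rightarrow> 'a) \<Rightarrow> nat \<Rightarrow> nat \<Rightarrow> 'a" where
  "hcat k A B i j = (if j < k then A i j else B i (j - k))"

end

theory Submission
  imports Defs "HOL-Complex_Analysis.Complex_Analysis"
begin


definition ser :: "(nat \<Rightarrow> real) \<Rightarrow> (nat \<Rightarrow> complex) \<Rightarrow> complex \<Rightarrow> complex" where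
  "ser p b = (\<lambda>z. \<Sum>n. b n / of_real (p n) * z ^ n)"

definition bnd :: "(nat \<Rightarrow> complex) \<Rightarrow> bool" where
  "bnd b \<longleftrightarrow> (\<exists>C. \<forall>n. norm (b n) \<le> C)"

locale pp =
  fixes p :: "nat \<Rightarrow> real"
  assumes ppos: "\<And>n. p n > 0"
    and pgrowth: "filterlim (\<lambda>n. root n (p n)) at_top sequentially"
begin

lemma ser_summable:
  assumes "bnd b"
  shows "summable (\<lambda>n. b n / of_real (p n) * z ^ n)"
proof -
  obtain C where C: "\<And>n. norm (b n) \<le> C" using assms unfolding bnd_def by blast
  have "eventually (\<lambda>n. 2 * (norm z + 1) \<le> root n (p n)) sequentially"
    using pgrowth unfolding filterlim_at_top by blast
  then obtain N where N: "\<And>n. n \<ge> N \<Longrightarrow> 2 * (norm z + 1) \<le> root n (p n)"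
    unfolding eventually_sequentially by blast
  have bound: "norm (b n / of_real (p n) * z ^ n) \<le> C * (1/2) ^ n" if "n \<ge> Suc N" for n
  proof -
    have n0: "n > 0" using that by simp
    have pn: "p n = root n (p n) ^ n" using real_root_pow_pos[OF n0 ppos[of n]] by simp
    have "(2 * (norm z + 1)) ^ n \<le> root n (p n) ^ n"
      by (rule power_mono) (use N[of n] that in auto)
    hence le: "(2 * (norm z + 1)) ^ n \<le> p n" using pn by simp
    have pos2: "0 < (2 * (norm z + 1)) ^ n" proof -
      have "0 < 2 * (norm z + 1)" by (smt (verit) norm_ge_zero)
      then show ?thesis by simp
    qed
    have "norm (b n / of_real (p n) * z ^ n) = norm (b n) * norm z ^ n / p n"
      using ppos[of n] by (simp add: norm_mult norm_divide norm_power)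
    also have "\<dots> \<le> C * norm z ^ n / p n"
      using C[of n] ppos[of n] by (intro divide_right_mono mult_right_mono) auto
    also have "\<dots> \<le> C * norm z ^ n / (2 * (norm z + 1)) ^ n"
    proof -
      have C0: "C \<ge> 0" using C[of 0] norm_ge_zero order_trans by blast
      show ?thesis using C0 le pos2
        by (intro divide_left_mono) (auto intro!: mult_pos_pos)
    qed
    also have "\<dots> = C * (norm z / (2 * (norm z + 1))) ^ n" by (simp add: power_divide)
    also have "\<dots> \<le> C * (1/2) ^ n"
    proof -
      have C0: "C \<ge> 0" using C[of 0] norm_ge_zero order_trans by blast
      have d: "0 < 2 * (norm z + 1)" by (smt (verit) norm_ge_zero)
      have "norm z / (2 * (norm z + 1)) \<le> 1/2 \<longleftrightarrow> norm z \<le> 1/2 * (2 * (norm z + 1))"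
        by (rule pos_divide_le_eq[OF d])
      hence "norm z / (2 * (norm z + 1)) \<le> 1/2" by simp
      then show ?thesis using C0
        by (intro mult_left_mono power_mono) auto
    qed
    finally show ?thesis .
  qed
  show ?thesis
    by (rule summable_comparison_test'[OF _ bound]) (simp add: summable_geometric)
qed

lemma ser_fps:
  assumes "bnd b"
  shows "ser p b = eval_fps (Abs_fps (\<lambda>n. b n / of_real (p n)))"
    and "fps_conv_radius (Abs_fps (\<lambda>n. b n / of_real (p n))) = \<infinity>"
proof -
  show "ser p b = eval_fps (Abs_fps (\<lambda>n. b n / of_real (p n)))"
    by (simp add: ser_def eval_fps_def fun_eq_iff)
  show "fps_conv_radius (Abs_fps (\<lambda>n. b n / of_real (p n))) = \<infinity>"
    unfolding fps_conv_radius_def using ser_summable[OF assms]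
    by (intro conv_radius_inftyI'') simp
qed

lemma ser_hol: "bnd b \<Longrightarrow> ser p b holomorphic_on UNIV"
  using ser_fps[of b] by (simp add: holomorphic_on_eval_fps)

lemma tcoeff_ser: "bnd b \<Longrightarrow> tcoeff (ser p b) n = b n / of_real (p n)"
proof -
  assume b: "bnd b"
  have "ser p b has_fps_expansion (Abs_fps (\<lambda>n. b n / of_real (p n)))"
    using ser_fps[OF b] by (simp add: eval_fps_has_fps_expansion)
  from fps_nth_fps_expansion[OF this, of n] show ?thesis
    by (simp add: tcoeff_def)
qed

lemma taylor:
  assumes "f holomorphic_on UNIV"
  shows "f z = (\<Sum>n. tcoeff f n * z ^ n)"
proof -
  have "((\<lambda>n. (deriv ^^ n) f 0 / (fact n) * (z-0)^n) sums f z)"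
    by (rule holomorphic_power_series[where r="norm z + 1"]) (use assms in \<open>auto intro: holomorphic_on_subset\<close>)
  then show ?thesis by (simp add: tcoeff_def sums_iff)
qed

lemma Ap_ser:
  assumes "f \<in> Ap p"
  shows "f = ser p (\<lambda>n. of_real (p n) * tcoeff f n)" "bnd (\<lambda>n. of_real (p n) * tcoeff f n)"
proof -
  have "\<And>n. of_real (p n) \<noteq> (0::complex)" using ppos by (simp add: less_le)
  moreover have hol: "f holomorphic_on UNIV" using assms unfolding Ap_def by blast
  ultimately show "f = ser p (\<lambda>n. of_real (p n) * tcoeff f n)"
    unfolding ser_def fun_eq_iff using taylor[OF hol] by simp
  obtain C where "\<And>n. p n * norm (tcoeff f n) \<le> C"
    using assms unfolding Ap_def bdd_above_def by auto
  then show "bnd (\<lambda>n. of_real (p n) * tcoeff f n)"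
    unfolding bnd_def using ppos by (auto simp: norm_mult less_imp_le)
qed

lemma ser_Ap: "bnd b \<Longrightarrow> ser p b \<in> Ap p"
proof -
  assume b: "bnd b"
  then obtain C where C: "\<And>n. norm (b n) \<le> C" unfolding bnd_def by blast
  have "p n * norm (tcoeff (ser p b) n) = norm (b n)" for n
    using ppos[of n] by (simp add: tcoeff_ser[OF b] norm_divide)
  then show ?thesis unfolding Ap_def using ser_hol[OF b] C
    by (auto simp: bdd_above_def)
qed

lemma ser_inj: "bnd b \<Longrightarrow> bnd c \<Longrightarrow> ser p b = ser p c \<Longrightarrow> b n = c n"
proof -
  assume b: "bnd b" and c: "bnd c" and e: "ser p b = ser p c"
  have "b n / of_real (p n) = c n / of_real (p n)"
    using tcoeff_ser[OF b, of n] tcoeff_ser[OF c, of n] e by metis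
  then show ?thesis using ppos[of n] by (simp add: less_le)
qed

lemma bnd_mult: "bnd a \<Longrightarrow> bnd b \<Longrightarrow> bnd (\<lambda>n. a n * b n)"
proof -
  assume "bnd a" "bnd b"
  then obtain A B where A: "\<And>n. norm (a n) \<le> A" and B: "\<And>n. norm (b n) \<le> B" unfolding bnd_def by blast
  have "norm (a n * b n) \<le> A * B" for n
    unfolding norm_mult by (rule mult_mono) (use A B order_trans norm_ge_zero in blast)+
  then show ?thesis unfolding bnd_def by blast
qed

lemma bnd_sum: "(\<And>l. l \<in> S \<Longrightarrow> bnd (b l)) \<Longrightarrow> bnd (\<lambda>n. \<Sum>l\<in>S. b l n)"
proof (induction S rule: infinite_finite_induct)
  case (infinite A) then show ?case by (simp add: bnd_def) (metis order_refl)
next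
  case empty then show ?case by (simp add: bnd_def) (metis order_refl)
next
  case (insert x F)
  then obtain A B where A: "\<And>n. norm (b x n) \<le> A" and B: "\<And>n. norm (\<Sum>l\<in>F. b l n) \<le> B"
    unfolding bnd_def by (metis insertI1 insertI2)
  have "norm (b x n + (\<Sum>l\<in>F. b l n)) \<le> A + B" for n
    by (rule order_trans[OF norm_triangle_ineq add_mono[OF A B]])
  then show ?case using insert unfolding bnd_def by auto
qed

lemma hmul_ser: "bnd a \<Longrightarrow> bnd b \<Longrightarrow> hmul p (ser p a) (ser p b) = ser p (\<lambda>n. a n * b n)"
proof -
  assume a: "bnd a" and b: "bnd b"
  have e: "of_real (p n) * (a n / of_real (p n)) * (b n / of_real (p n)) * z ^ n
      = a n * b n / of_real (p n) * z ^ n" for n and z :: complex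
  proof -
    have "of_real (p n) \<noteq> (0::complex)" using ppos[of n] by (simp add: less_le)
    then show ?thesis by (simp add: divide_simps)
  qed
  show ?thesis unfolding hmul_def tcoeff_ser[OF a] tcoeff_ser[OF b] e
    by (simp add: ser_def)
qed

lemma sum_ser:
  assumes "\<And>l. l \<in> S \<Longrightarrow> bnd (b l)" "finite S"
  shows "(\<lambda>z. \<Sum>l\<in>S. ser p (b l) z) = ser p (\<lambda>n. \<Sum>l\<in>S. b l n)"
proof
  fix z
  have "(\<Sum>l\<in>S. ser p (b l) z) = (\<Sum>n. \<Sum>l\<in>S. b l n / of_real (p n) * z ^ n)"
    unfolding ser_def by (rule suminf_sum[symmetric]) (use assms ser_summable in auto)
  then show "(\<Sum>l\<in>S. ser p (b l) z) = ser p (\<lambda>n. \<Sum>l\<in>S. b l n) z"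
    unfolding ser_def by (simp add: sum_divide_distrib sum_distrib_right)
qed

lemma unit_ser: "Ap_unit p = ser p (\<lambda>_. 1)"
  unfolding Ap_unit_def ser_def by simp

lemma zero_ser: "(\<lambda>_. 0) = ser p (\<lambda>_. 0)"
  unfolding ser_def by simp

end


definition mm :: "nat \<Rightarrow> (nat \<Rightarrow> nat \<Rightarrow> complex) \<Rightarrow> (nat \<Rightarrow> nat \<Rightarrow> complex) \<Rightarrow> nat \<Rightarrow> nat \<Rightarrow> complex" where
  "mm n A B = (\<lambda>i j. \<Sum>l<n. A i l * B l j)"

definition idm :: "nat \<Rightarrow> nat \<Rightarrow> complex" where
  "idm i j = (if i = j then 1 else 0)"

definition ee :: "nat \<Rightarrow> nat \<Rightarrow> complex" where
  "ee k i = (if i = k then 1 else 0)"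

definition eqK :: "nat \<Rightarrow> (nat \<Rightarrow> nat \<Rightarrow> complex) \<Rightarrow> (nat \<Rightarrow> nat \<Rightarrow> complex) \<Rightarrow> bool" where
  "eqK n A B \<longleftrightarrow> (\<forall>i<n. \<forall>j<n. A i j = B i j)"

definition bndm :: "nat \<Rightarrow> (nat \<Rightarrow> nat \<Rightarrow> complex) \<Rightarrow> real \<Rightarrow> bool" where
  "bndm n A a \<longleftrightarrow> (\<forall>i<n. \<forall>j<n. norm (A i j) \<le> a)"

lemma mm_assoc: "mm n (mm n A B) C = mm n A (mm n B C)"
  unfolding mm_def
  by (auto simp: fun_eq_iff sum_distrib_left sum_distrib_right mult.assoc intro: sum.swap)

lemma sum_delta_gen: "i < (n::nat) \<Longrightarrow> (\<Sum>l<n. if l = i then X l else 0) = (X i :: complex)"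
  using sum.delta[of "{..<n}" i X] by simp

lemma sum_idm_left: "i < n \<Longrightarrow> (\<Sum>l<n. idm i l * X l) = X i"
proof -
  assume "i < n"
  have "(\<Sum>l<n. idm i l * X l) = (\<Sum>l<n. if l = i then X l else 0)"
    by (intro sum.cong) (auto simp: idm_def)
  then show ?thesis using \<open>i < n\<close> by simp
qed

lemma sum_idm_right: "j < n \<Longrightarrow> (\<Sum>l<n. X l * idm l j) = X j"
proof -
  assume "j < n"
  have "(\<Sum>l<n. X l * idm l j) = (\<Sum>l<n. if l = j then X l else 0)"
    by (intro sum.cong) (auto simp: idm_def)
  then show ?thesis using \<open>j < n\<close> by simp
qed

lemma sum_ee: "k < n \<Longrightarrow> (\<Sum>l<n. X l * ee k l) = X k"
proof -
  assume "k < n"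
  have "(\<Sum>l<n. X l * ee k l) = (\<Sum>l<n. if l = k then X l else 0)"
    by (intro sum.cong) (auto simp: ee_def)
  then show ?thesis using \<open>k < n\<close> by simp
qed

lemma mm_cong_col: "(\<And>l. l < n \<Longrightarrow> X l j = Y l j) \<Longrightarrow> mm n A X i j = mm n A Y i j"
  unfolding mm_def by (intro sum.cong) auto

lemma mm_idl: "i < n \<Longrightarrow> mm n idm B i j = B i j"
  unfolding mm_def by (rule sum_idm_left)

lemma mm_idr: "j < n \<Longrightarrow> mm n A idm i j = A i j"
  unfolding mm_def by (rule sum_idm_right)

lemma mm_cong_l: "eqK n A A' \<Longrightarrow> i < n \<Longrightarrow> mm n A B i j = mm n A' B i j"
  unfolding mm_def eqK_def by (intro sum.cong) auto

lemma mm_cong_r: "eqK n B B' \<Longrightarrow> j < n \<Longrightarrow> mm n A B i j = mm n A B' i j"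
  unfolding mm_def eqK_def by (intro sum.cong) auto

lemma inv_cancel:
  assumes "eqK n (mm n B C) idm"
  shows "eqK n (mm n (mm n A B) (mm n C D)) (mm n A D)"
  unfolding eqK_def
proof (intro allI impI)
  fix i j assume ij: "i < n" "j < n"
  have "mm n (mm n A B) (mm n C D) i j = mm n A (mm n (mm n B C) D) i j"
    by (simp add: mm_assoc)
  also have "\<dots> = mm n A (mm n idm D) i j"
    by (rule mm_cong_col) (rule mm_cong_l[OF assms])
  also have "\<dots> = mm n A D i j"
    by (rule mm_cong_col) (simp add: mm_idl)
  finally show "mm n (mm n A B) (mm n C D) i j = mm n A D i j" .
qed

lemma r1_prod:
  assumes "i < n" "j < n"
  shows "mm n (\<lambda>i j. idm i j + u i * a j) (\<lambda>i j. idm i j + v i * b j) i j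
       = idm i j + u i * a j + v i * b j + (\<Sum>l<n. a l * v l) * u i * b j"
proof -
  have "mm n (\<lambda>i j. idm i j + u i * a j) (\<lambda>i j. idm i j + v i * b j) i j
     = (\<Sum>l<n. idm i l * idm l j) + (\<Sum>l<n. idm i l * (v l * b j))
       + (\<Sum>l<n. (u i * a l) * idm l j) + (\<Sum>l<n. (u i * a l) * (v l * b j))"
    unfolding mm_def by (simp add: algebra_simps sum.distrib)
  also have "\<dots> = idm i j + v i * b j + u i * a j + (\<Sum>l<n. a l * v l) * u i * b j"
  proof -
    have 1: "(\<Sum>l<n. idm i l * idm l j) = idm i j" using assms(1) by (rule sum_idm_left)
    have 2: "(\<Sum>l<n. idm i l * (v l * b j)) = v i * b j" using assms(1) by (rule sum_idm_left)
    have 3: "(\<Sum>l<n. (u i * a l) * idm l j) = u i * a j" using assms(2) by (rule sum_idm_right)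
    have 4: "(\<Sum>l<n. (u i * a l) * (v l * b j)) = (\<Sum>l<n. a l * v l) * u i * b j"
      by (simp add: sum_distrib_left sum_distrib_right mult_ac)
    show ?thesis unfolding 1 2 3 4 ..
  qed
  finally show ?thesis by (simp add: algebra_simps)
qed

lemma norm_sum_le_n: "(\<And>l. l < n \<Longrightarrow> norm (f l) \<le> B) \<Longrightarrow> norm (\<Sum>l<n. f l) \<le> real n * B"
proof -
  assume h: "\<And>l. l < n \<Longrightarrow> norm (f l) \<le> B"
  have "norm (\<Sum>l<n. f l) \<le> (\<Sum>l<n. B)" by (rule sum_norm_le) (use h in auto)
  then show ?thesis by simp
qed

lemma norm_prod_le: fixes a b :: complex shows "norm a \<le> A \<Longrightarrow> norm b \<le> B \<Longrightarrow> norm (a * b) \<le> A * B"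
  unfolding norm_mult by (rule mult_mono) (auto intro: order_trans[OF norm_ge_zero])

lemma bndm_mm: "bndm n A a \<Longrightarrow> bndm n B b \<Longrightarrow> bndm n (mm n A B) (real n * (a * b))"
  unfolding bndm_def mm_def by (auto intro!: norm_sum_le_n norm_prod_le)

lemma bndm_mono: "bndm n A a \<Longrightarrow> a \<le> b \<Longrightarrow> bndm n A b"
  unfolding bndm_def by (meson order_trans)

lemma bndm_r1: "(\<And>i. i < n \<Longrightarrow> norm (u i) \<le> U) \<Longrightarrow> (\<And>i. i < n \<Longrightarrow> norm (a i) \<le> A)
  \<Longrightarrow> bndm n (\<lambda>i j. idm i j + u i * a j) (1 + U * A)"
  unfolding bndm_def
proof (intro allI impI)
  fix i j assume u: "\<And>i. i < n \<Longrightarrow> norm (u i) \<le> U" and a: "\<And>i. i < n \<Longrightarrow> norm (a i) \<le> A"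
    and ij: "i < n" "j < n"
  have "norm (idm i j + u i * a j) \<le> norm (idm i j) + norm (u i * a j)" by (rule norm_triangle_ineq)
  also have "\<dots> \<le> 1 + U * A"
    by (intro add_mono norm_prod_le u a ij) (simp add: idm_def)
  finally show "norm (idm i j + u i * a j) \<le> 1 + U * A" .
qed

lemma sum_ee': "k < n \<Longrightarrow> (\<Sum>l<n. ee k l * X l) = X k"
  using sum_ee[of k n X] by (simp add: mult.commute)

lemma eqK_trans: "eqK n A B \<Longrightarrow> eqK n B C \<Longrightarrow> eqK n A C"
  unfolding eqK_def by simp

lemma Wgen:
  fixes K k :: nat and c t :: "nat \<Rightarrow> complex" and R T \<delta> :: real
  assumes kK: "k < K" and tz: "\<And>j. j \<le> k \<Longrightarrow> t j = 0"
    and cb: "\<And>i. i < K \<Longrightarrow> norm (c i) \<le> R" and tb: "\<And>i. i < K \<Longrightarrow> norm (t i) \<le> T"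
    and dd: "norm (c k + (\<Sum>j<K. t j * c j)) \<ge> \<delta>" and dpos: "\<delta> > 0"
    and R0: "R \<ge> 0" and T0: "T \<ge> 0"
  shows "\<exists>W Wi. bndm K W (real K * ((1 + T) * (1 + (R + real K * (T * R) + 1) + (R + real K * (T * R) + 1) / \<delta>)))
     \<and> bndm K Wi (real K * ((1 + T) * (1 + (R + real K * (T * R) + 1) + (R + real K * (T * R) + 1) / \<delta>)))
     \<and> eqK K (mm K W Wi) idm \<and> eqK K (mm K Wi W) idm
     \<and> (\<forall>i<K. \<forall>j<k. W i j = idm i j) \<and> (\<forall>i<K. W i k = c i)"
proof -
  define R1 where "R1 = R + real K * (T * R) + 1"
  define s where "s = (\<Sum>j<K. t j * c j)"
  define d where "d = c k + s"
  define u where "u = (\<lambda>i. c i + ee k i * s - ee k i)"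
  define W1 where "W1 = (\<lambda>i j. idm i j + ee k i * (- t j))"
  define W1i where "W1i = (\<lambda>i j. idm i j + ee k i * t j)"
  define E where "E = (\<lambda>i j. idm i j + u i * ee k j)"
  define Ei where "Ei = (\<lambda>i j. idm i j + (- u i / d) * ee k j)"
  have tk: "t k = 0" using tz by simp
  have dn: "d \<noteq> 0" using dd dpos unfolding d_def s_def by auto
  have uk: "u k = d - 1" unfolding u_def d_def by (simp add: ee_def)
  have s_b: "norm s \<le> real K * (T * R)"
    unfolding s_def by (intro norm_sum_le_n norm_prod_le tb cb)
  have ub: "norm (u i) \<le> R1" if "i < K" for i
  proof -
    have "norm (u i) \<le> norm (c i) + norm (ee k i * s) + norm (ee k i)"
      unfolding u_def by (rule order_trans[OF norm_triangle_ineq4]) (simp add: norm_triangle_ineq)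
    also have "\<dots> \<le> R + real K * (T * R) + 1"
      using cb[OF that] s_b by (intro add_mono) (use R0 T0 in \<open>auto simp: ee_def\<close>)
    finally show ?thesis unfolding R1_def .
  qed
  have eW1: "eqK K (mm K W1 W1i) idm"
    unfolding eqK_def W1_def W1i_def
    using r1_prod[of _ K _ "ee k" "\<lambda>j. - t j" "ee k" t] sum_ee[OF kK, of "\<lambda>l. - t l"] tk
    by simp
  have eE: "eqK K (mm K E Ei) idm"
    unfolding eqK_def E_def Ei_def
  proof (intro allI impI)
    fix i j assume ij: "i < K" "j < K"
    have h: "(\<Sum>l<K. ee k l * (- u l / d)) = - (d - 1) / d"
      using sum_ee'[OF kK, of "\<lambda>l. - u l / d"] uk by (simp only:)
    show "mm K (\<lambda>i j. idm i j + u i * ee k j) (\<lambda>i j. idm i j + - u i / d * ee k j) i j = idm i j"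
      unfolding r1_prod[OF ij] h using dn by (simp add: field_simps)
  qed
  have eEi: "eqK K (mm K Ei E) idm"
    unfolding eqK_def E_def Ei_def
  proof (intro allI impI)
    fix i j assume ij: "i < K" "j < K"
    have h: "(\<Sum>l<K. ee k l * u l) = d - 1" using sum_ee'[OF kK] uk by simp
    show "mm K (\<lambda>i j. idm i j + - u i / d * ee k j) (\<lambda>i j. idm i j + u i * ee k j) i j = idm i j"
      unfolding r1_prod[OF ij] h using dn by (simp add: field_simps)
  qed
  have eW1i: "eqK K (mm K W1i W1) idm"
    unfolding eqK_def W1_def W1i_def
    using r1_prod[of _ K _ "ee k" t "ee k" "\<lambda>j. - t j"] sum_ee[OF kK, of t] tk
    by simp
  define W where "W = mm K W1 E"
  define Wi where "Wi = mm K Ei W1i"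
  have e1: "eqK K (mm K W Wi) idm"
    unfolding W_def Wi_def by (rule eqK_trans[OF inv_cancel[OF eE] eW1])
  have e2: "eqK K (mm K Wi W) idm"
    unfolding W_def Wi_def by (rule eqK_trans[OF inv_cancel[OF eW1i] eEi])
  have sumtu: "(\<Sum>l<K. - t l * u l) = - s"
  proof -
    have "(\<Sum>l<K. - t l * u l) = - (\<Sum>l<K. t l * c l) - (\<Sum>l<K. t l * ee k l) * s + (\<Sum>l<K. t l * ee k l)"
      unfolding u_def by (simp add: algebra_simps sum.distrib sum_subtractf sum_distrib_right sum_distrib_left)
    then show ?thesis unfolding sum_ee[OF kK] tk s_def by simp
  qed
  have Wij: "W i j = idm i j + ee k i * (- t j) + u i * ee k j + (- s) * ee k i * ee k j"
    if "i < K" "j < K" for i j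
    unfolding W_def W1_def E_def r1_prod[OF that] sumtu ..
  have col: "\<forall>i<K. \<forall>j<k. W i j = idm i j"
    using Wij tz kK by (auto simp: ee_def)
  have colk: "\<forall>i<K. W i k = c i"
    using Wij kK tk by (auto simp: ee_def idm_def u_def)
  have b1: "bndm K W1 (1 + 1 * T)" unfolding W1_def
    by (rule bndm_r1) (auto simp: ee_def tb T0)
  have b1i: "bndm K W1i (1 + 1 * T)" unfolding W1i_def
    by (rule bndm_r1) (auto simp: ee_def tb T0)
  have bE: "bndm K E (1 + R1 * 1)" unfolding E_def
    by (rule bndm_r1) (auto simp: ee_def ub)
  have bEi: "bndm K Ei (1 + (R1 / norm d) * 1)" unfolding Ei_def
    by (rule bndm_r1) (auto simp: ee_def ub norm_divide divide_right_mono)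
  have R1p: "R1 \<ge> 0" unfolding R1_def using R0 T0 by simp
  have "R1 / norm d \<le> R1 / \<delta>"
    using dd dpos R1p unfolding d_def s_def by (intro divide_left_mono) (auto intro!: mult_pos_pos)
  hence bEi': "bndm K Ei (1 + R1 / \<delta>)" using bndm_mono[OF bEi] by simp
  have bW: "bndm K W (real K * ((1 + T) * (1 + R1 + R1 / \<delta>)))"
    unfolding W_def
    by (rule bndm_mono[OF bndm_mm[OF b1 bE]])
       (use R1p T0 dpos in \<open>auto intro!: mult_left_mono\<close>)
  have bWi: "bndm K Wi (real K * ((1 + T) * (1 + R1 + R1 / \<delta>)))"
    unfolding Wi_def
    by (rule bndm_mono[OF bndm_mm[OF bEi' b1i]])
       (use R1p T0 dpos in \<open>auto intro!: mult_left_mono simp: algebra_simps\<close>)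
  show ?thesis unfolding R1_def[symmetric]
    using bW bWi e1 e2 col colk by blast
qed


lemma Wy:
  fixes K k :: nat and R :: real
  assumes kK: "k < K" and R0: "R \<ge> 0"
  shows "\<exists>B. \<forall>(c::nat \<Rightarrow> complex) (y::nat \<Rightarrow> complex). (\<forall>j<k. y j = 0) \<and> (\<Sum>j<K. y j * c j) = 1
      \<and> (\<forall>i<K. norm (c i) \<le> R) \<and> (\<forall>i<K. norm (y i) \<le> R) \<longrightarrow>
     (\<exists>W Wi. bndm K W B \<and> bndm K Wi B
     \<and> eqK K (mm K W Wi) idm \<and> eqK K (mm K Wi W) idm
     \<and> (\<forall>i<K. \<forall>j<k. W i j = idm i j) \<and> (\<forall>i<K. W i k = c i))"
proof -
  define T where "T = 4 * (1 + R) * R"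
  define \<delta> where "\<delta> = 1 / (2 * R + 2)"
  have T0: "T \<ge> 0" unfolding T_def using R0 by simp
  have dpos: "\<delta> > 0" unfolding \<delta>_def using R0 by simp
  show ?thesis
  proof (intro exI[of _ "real K * ((1 + T) * (1 + (R + real K * (T * R) + 1) + (R + real K * (T * R) + 1) / \<delta>))"] allI impI)
  fix c y :: "nat \<Rightarrow> complex" assume h: "(\<forall>j<k. y j = 0) \<and> (\<Sum>j<K. y j * c j) = 1
      \<and> (\<forall>i<K. norm (c i) \<le> R) \<and> (\<forall>i<K. norm (y i) \<le> R)"
  then have yz: "\<And>j. j < k \<Longrightarrow> y j = 0" and yc: "(\<Sum>j<K. y j * c j) = 1"
    and cb: "\<And>i. i < K \<Longrightarrow> norm (c i) \<le> R" and yb: "\<And>i. i < K \<Longrightarrow> norm (y i) \<le> R"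
    by auto
  define s where "s = (\<lambda>j. y j - ee k j * y k)"
  define d0 where "d0 = 1 - y k * c k"
  have sz: "s j = 0" if "j \<le> k" for j
    using yz[of j] that unfolding s_def ee_def by (cases "j = k") auto
  have sc: "(\<Sum>j<K. s j * c j) = d0"
  proof -
    have "(\<Sum>j<K. s j * c j) = (\<Sum>j<K. y j * c j) - (\<Sum>j<K. ee k j * (y k * c j))"
      unfolding s_def by (simp add: algebra_simps sum_subtractf)
    also have "\<dots> = 1 - y k * c k" unfolding yc sum_ee'[OF kK] ..
    finally show ?thesis unfolding d0_def .
  qed
  have sb: "norm (s j) \<le> 2 * R" if "j < K" for j
  proof -
    have "norm (s j) \<le> norm (y j) + norm (ee k j * y k)" unfolding s_def by (rule norm_triangle_ineq4)
    also have "\<dots> \<le> R + R" using yb[OF that] yb[OF kK] by (intro add_mono) (auto simp: ee_def R0)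
    finally show ?thesis by simp
  qed
  have "\<exists>t. (\<forall>j. j \<le> k \<longrightarrow> t j = 0) \<and> (\<forall>i<K. norm (t i) \<le> T) \<and> norm (c k + (\<Sum>j<K. t j * c j)) \<ge> \<delta>"
  proof (cases "norm d0 \<ge> 1/2")
    case True
    define lam where "lam = (1 - c k) / d0"
    have d0n: "d0 \<noteq> 0" using True by auto
    have lb: "norm lam \<le> 2 * (1 + R)"
    proof -
      have "norm (1 - c k) \<le> 1 + R" using cb[OF kK] norm_triangle_ineq4[of 1 "c k"] by simp
      moreover have "norm lam = norm (1 - c k) / norm d0" unfolding lam_def by (simp add: norm_divide)
      moreover have "norm (1 - c k) / norm d0 \<le> (1 + R) / (1/2)"
        by (rule frac_le) (use R0 True \<open>norm (1 - c k) \<le> 1 + R\<close> in auto)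
      ultimately show ?thesis by simp
    qed
    show ?thesis
    proof (intro exI[of _ "\<lambda>j. lam * s j"] conjI allI impI)
      show "lam * s j = 0" if "j \<le> k" for j using sz[OF that] by simp
      show "norm (lam * s i) \<le> T" if "i < K" for i
        using norm_prod_le[OF lb sb[OF that]] unfolding T_def by (simp add: algebra_simps)
      have "(\<Sum>j<K. lam * s j * c j) = lam * d0" unfolding sc[symmetric] by (simp add: sum_distrib_left mult.assoc)
      hence "c k + (\<Sum>j<K. lam * s j * c j) = 1" unfolding lam_def using d0n by simp
      then show "\<delta> \<le> norm (c k + (\<Sum>j<K. lam * s j * c j))" unfolding \<delta>_def using R0 by simp
    qed
  next
    case False
    have "norm (y k * c k) \<ge> 1/2"
      using False norm_triangle_ineq[of "1 - y k * c k" "y k * c k"] unfolding d0_def by simp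
    hence "norm (y k) * norm (c k) \<ge> 1/2" by (simp add: norm_mult)
    moreover have "norm (y k) * norm (c k) \<le> R * norm (c k)"
      by (rule mult_right_mono[OF yb[OF kK] norm_ge_zero])
    ultimately have h1: "R * norm (c k) \<ge> 1/2" by linarith
    have "(2*R+2) * norm (c k) = 2 * (R * norm (c k)) + 2 * norm (c k)" by (simp add: algebra_simps)
    hence "1 \<le> (2*R+2) * norm (c k)" using h1 norm_ge_zero[of "c k"] by linarith
    hence h2: "1 \<le> norm (c k) * (2*R+2)" by (simp add: mult.commute)
    have "1 / (2*R+2) \<le> norm (c k) \<longleftrightarrow> 1 \<le> norm (c k) * (2*R+2)"
      by (rule pos_divide_le_eq) (use R0 in simp)
    hence "norm (c k) \<ge> \<delta>" unfolding \<delta>_def using h2 by simp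
    then show ?thesis using T0 by (intro exI[of _ "\<lambda>_. 0"]) auto
  qed
  then obtain t where tz: "\<And>j. j \<le> k \<Longrightarrow> t j = 0" and tb: "\<And>i. i < K \<Longrightarrow> norm (t i) \<le> T"
    and dd: "norm (c k + (\<Sum>j<K. t j * c j)) \<ge> \<delta>" by blast
  from Wgen[OF kK tz cb tb dd dpos R0 T0] show "\<exists>W Wi.
       bndm K W (real K * ((1 + T) * (1 + (R + real K * (T * R) + 1) + (R + real K * (T * R) + 1) / \<delta>))) \<and>
       bndm K Wi (real K * ((1 + T) * (1 + (R + real K * (T * R) + 1) + (R + real K * (T * R) + 1) / \<delta>))) \<and>
       eqK K (mm K W Wi) idm \<and> eqK K (mm K Wi W) idm \<and> (\<forall>i<K. \<forall>j<k. W i j = idm i j) \<and> (\<forall>i<K. W i k = c i)" .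
qed
qed


lemma LA:
  fixes K k :: nat and M :: real
  assumes "k \<le> K" "M \<ge> 0"
  shows "\<exists>C. \<forall>F Gm. (\<forall>i<K. \<forall>j<k. norm (F i j) \<le> M) \<and> (\<forall>i<k. \<forall>j<K. norm (Gm i j) \<le> M)
     \<and> (\<forall>i<k. \<forall>j<k. mm K Gm F i j = idm i j) \<longrightarrow>
     (\<exists>U V. bndm K U C \<and> bndm K V C \<and> eqK K (mm K U V) idm \<and> eqK K (mm K V U) idm
        \<and> (\<forall>i<K. \<forall>j<k. U i j = F i j))"
  using assms(1)
proof (induction k)
  case 0
  have b: "bndm K idm 1" by (simp add: bndm_def idm_def)
  have e: "eqK K (mm K idm idm) idm" by (simp add: eqK_def mm_idl)
  show ?case by (intro exI[of _ 1] allI impI) (use b e in blast)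
next
  case (Suc k)
  have kK: "k < K" using Suc.prems by simp
  have kle: "k \<le> K" using Suc.prems by simp
  obtain C where IH: "\<forall>F Gm. (\<forall>i<K. \<forall>j<k. norm (F i j) \<le> M) \<and> (\<forall>i<k. \<forall>j<K. norm (Gm i j) \<le> M)
     \<and> (\<forall>i<k. \<forall>j<k. mm K Gm F i j = idm i j) \<longrightarrow>
     (\<exists>U V. bndm K U C \<and> bndm K V C \<and> eqK K (mm K U V) idm \<and> eqK K (mm K V U) idm
        \<and> (\<forall>i<K. \<forall>j<k. U i j = F i j))"
    using Suc.IH[OF kle] by blast
  define Cp where "Cp = max C 0"
  define R where "R = real K * (Cp * M)"
  have R0: "R \<ge> 0" unfolding R_def Cp_def using assms(2) by simp
  obtain B where WB: "\<And>c y. (\<forall>j<k. y j = 0) \<and> (\<Sum>j<K. y j * c j) = 1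
      \<and> (\<forall>i<K. norm (c i) \<le> R) \<and> (\<forall>i<K. norm (y i) \<le> R) \<Longrightarrow>
     (\<exists>W Wi. bndm K W B \<and> bndm K Wi B
     \<and> eqK K (mm K W Wi) idm \<and> eqK K (mm K Wi W) idm
     \<and> (\<forall>i<K. \<forall>j<k. W i j = idm i j) \<and> (\<forall>i<K. W i k = c i))"
    using Wy[OF kK R0] by blast
  show ?case
  proof (intro exI[of _ "real K * (Cp * B)"] allI impI)
    fix F Gm assume H: "(\<forall>i<K. \<forall>j<Suc k. norm (F i j) \<le> M) \<and> (\<forall>i<Suc k. \<forall>j<K. norm (Gm i j) \<le> M)
     \<and> (\<forall>i<Suc k. \<forall>j<Suc k. mm K Gm F i j = idm i j)"
    then have Fb: "\<And>i j. i < K \<Longrightarrow> j < Suc k \<Longrightarrow> norm (F i j) \<le> M"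
      and Gb: "\<And>i j. i < Suc k \<Longrightarrow> j < K \<Longrightarrow> norm (Gm i j) \<le> M"
      and GF: "\<And>i j. i < Suc k \<Longrightarrow> j < Suc k \<Longrightarrow> mm K Gm F i j = idm i j" by auto
    have "(\<forall>i<K. \<forall>j<k. norm (F i j) \<le> M) \<and> (\<forall>i<k. \<forall>j<K. norm (Gm i j) \<le> M)
     \<and> (\<forall>i<k. \<forall>j<k. mm K Gm F i j = idm i j)" using Fb Gb GF by auto
    from IH[rule_format, OF this] obtain U V where Ub: "bndm K U C" and Vb: "bndm K V C"
      and UV: "eqK K (mm K U V) idm" and VU: "eqK K (mm K V U) idm"
      and UF: "\<And>i j. i < K \<Longrightarrow> j < k \<Longrightarrow> U i j = F i j" by blast
    have Ub': "bndm K U Cp" and Vb': "bndm K V Cp" using Ub Vb bndm_mono Cp_def by auto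
    define c where "c = (\<lambda>i. mm K V F i k)"
    define y where "y = (\<lambda>j. mm K Gm U k j)"
    have yz: "\<forall>j<k. y j = 0"
    proof (intro allI impI)
      fix j assume j: "j < k"
      have "y j = mm K Gm F k j" unfolding y_def by (rule mm_cong_col) (use UF j in auto)
      also have "\<dots> = 0" using GF[of k j] j by (simp add: idm_def)
      finally show "y j = 0" .
    qed
    have yc: "(\<Sum>j<K. y j * c j) = 1"
    proof -
      have "(\<Sum>j<K. y j * c j) = mm K (mm K Gm U) (mm K V F) k k"
        unfolding y_def c_def by (simp only: mm_def[of K "mm K Gm U" "mm K V F"])
      also have "\<dots> = mm K Gm F k k" using inv_cancel[OF UV, of Gm F] kK by (simp add: eqK_def)
      also have "\<dots> = 1" using GF[of k k] by (simp add: idm_def)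
      finally show ?thesis .
    qed
    have cb: "\<forall>i<K. norm (c i) \<le> R"
      unfolding c_def mm_def R_def using Vb' Fb kK
      by (auto simp: bndm_def intro!: norm_sum_le_n norm_prod_le)
    have yb: "\<forall>i<K. norm (y i) \<le> R"
    proof (intro allI impI)
      fix i assume i: "i < K"
      have "norm (y i) \<le> real K * (M * Cp)"
        unfolding y_def mm_def using Ub' Gb kK i
        by (auto simp: bndm_def intro!: norm_sum_le_n norm_prod_le)
      then show "norm (y i) \<le> R" unfolding R_def by (simp add: mult.commute)
    qed
    obtain W Wi where Wb: "bndm K W B" and Wib: "bndm K Wi B" and WWi: "eqK K (mm K W Wi) idm"
      and WiW: "eqK K (mm K Wi W) idm" and Wc: "\<forall>i<K. \<forall>j<k. W i j = idm i j"
      and Wk: "\<forall>i<K. W i k = c i"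
      using WB[of y c] yz yc cb yb by blast
    show "\<exists>U' V'. bndm K U' (real K * (Cp * B)) \<and> bndm K V' (real K * (Cp * B)) \<and>
        eqK K (mm K U' V') idm \<and> eqK K (mm K V' U') idm \<and> (\<forall>i<K. \<forall>j<Suc k. U' i j = F i j)"
    proof (rule exI[of _ "mm K U W"], rule exI[of _ "mm K Wi V"], intro conjI allI impI)
      show "bndm K (mm K U W) (real K * (Cp * B))" by (rule bndm_mm[OF Ub' Wb])
      show "bndm K (mm K Wi V) (real K * (Cp * B))" using bndm_mm[OF Wib Vb'] by (simp add: mult.commute)
      show "eqK K (mm K (mm K U W) (mm K Wi V)) idm" by (rule eqK_trans[OF inv_cancel[OF WWi] UV])
      show "eqK K (mm K (mm K Wi V) (mm K U W)) idm" by (rule eqK_trans[OF inv_cancel[OF VU] WiW])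
      fix i j assume i: "i < K" and j: "j < Suc k"
      show "mm K U W i j = F i j"
      proof (cases "j < k")
        case True
        have "mm K U W i j = mm K U idm i j" by (rule mm_cong_col) (use Wc True in auto)
        also have "\<dots> = F i j" using mm_idr[of j K U i] True kK UF i by simp
        finally show ?thesis .
      next
        case False
        hence jk: "j = k" using j by simp
        have "mm K U W i k = mm K U (mm K V F) i k" by (rule mm_cong_col) (use Wk c_def in auto)
        also have "\<dots> = mm K (mm K U V) F i k" by (simp add: mm_assoc)
        also have "\<dots> = mm K idm F i k" by (rule mm_cong_l[OF UV i])
        also have "\<dots> = F i k" by (rule mm_idl[OF i])
        finally show ?thesis using jk by simp
      qed
    qed
  qed
qed



context pp
begin

lemma bnd_const: "bnd (\<lambda>_. c)"
  unfolding bnd_def by blast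

lemma MM2:
  fixes m :: nat
  assumes "\<And>l. l < m \<Longrightarrow> bnd (a l)" "\<And>l. l < m \<Longrightarrow> bnd (b l)"
  shows "(\<lambda>z. \<Sum>l<m. hmul p (ser p (a l)) (ser p (b l)) z) = ser p (\<lambda>n. \<Sum>l<m. a l n * b l n)"
proof -
  have "(\<lambda>z. \<Sum>l<m. hmul p (ser p (a l)) (ser p (b l)) z) = (\<lambda>z. \<Sum>l<m. ser p (\<lambda>n. a l n * b l n) z)"
    by (intro ext sum.cong refl) (simp add: hmul_ser assms)
  also have "\<dots> = ser p (\<lambda>n. \<Sum>l<m. a l n * b l n)"
    by (rule sum_ser) (auto intro: bnd_mult assms)
  finally show ?thesis .
qed

definition nf :: "(complex \<Rightarrow> complex) \<Rightarrow> nat \<Rightarrow> complex" where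
  "nf h = (\<lambda>n. of_real (p n) * tcoeff h n)"

lemma MM:
  assumes "\<And>l. l < m \<Longrightarrow> A i l \<in> Ap p" "\<And>l. l < m \<Longrightarrow> B l j \<in> Ap p"
  shows "Ap_matmul p m A B i j = ser p (\<lambda>n. \<Sum>l<m. nf (A i l) n * nf (B l j) n)"
proof -
  have "Ap_matmul p m A B i j = (\<lambda>z. \<Sum>l<m. hmul p (ser p (nf (A i l))) (ser p (nf (B l j))) z)"
    unfolding Ap_matmul_def
  proof (intro ext sum.cong refl)
    fix z l assume "l \<in> {..<m}"
    then have l: "l < m" by simp
    have a: "A i l = ser p (nf (A i l))" using Ap_ser(1)[OF assms(1)[OF l]] unfolding nf_def .
    have b: "B l j = ser p (nf (B l j))" using Ap_ser(1)[OF assms(2)[OF l]] unfolding nf_def .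
    show "hmul p (A i l) (B l j) z = hmul p (ser p (nf (A i l))) (ser p (nf (B l j))) z"
      using arg_cong2[OF a b, of "hmul p"] by (rule fun_cong)
  qed
  also have "\<dots> = ser p (\<lambda>n. \<Sum>l<m. nf (A i l) n * nf (B l j) n)"
    by (rule MM2) (simp_all add: nf_def Ap_ser(2) assms)
  finally show ?thesis .
qed

lemma fin_bound:
  assumes "finite S" "\<forall>x\<in>S. bnd (b x)"
  shows "\<exists>M\<ge>0. \<forall>x\<in>S. \<forall>n. norm (b x n) \<le> M"
  using assms
proof (induction S rule: finite_induct)
  case empty then show ?case by auto
next
  case (insert x F)
  then obtain M where M: "M \<ge> 0" "\<forall>y\<in>F. \<forall>n. norm (b y n) \<le> M" by auto
  obtain N where N: "\<forall>n. norm (b x n) \<le> N" using insert.prems unfolding bnd_def by auto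
  show ?case
    using M N by (intro exI[of _ "max M N"]) (auto simp: le_max_iff_disj)
qed


lemma ser_idm: "ser p (\<lambda>_. idm i j) = (if i = j then Ap_unit p else (\<lambda>_. 0))"
  by (simp add: idm_def unit_ser zero_ser[symmetric])

lemma main:
  shows "\<forall>k K f g. 0 < k \<and> k < K \<and> Ap_mat p K k f \<and> Ap_mat p k K g
            \<and> Ap_is_id p k (Ap_matmul p K g f) \<longrightarrow>
          (\<exists>fc G. Ap_mat p K (K - k) fc \<and> Ap_mat p K K G
            \<and> Ap_is_id p K (Ap_matmul p K G (hcat k f fc)))"
proof (intro allI impI)
  fix k K f g assume H: "0 < k \<and> k < K \<and> Ap_mat p K k f \<and> Ap_mat p k K g
            \<and> Ap_is_id p k (Ap_matmul p K g f)"
  then have kK: "k < K" and fA: "\<And>i j. i < K \<Longrightarrow> j < k \<Longrightarrow> f i j \<in> Ap p"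
    and gA: "\<And>i j. i < k \<Longrightarrow> j < K \<Longrightarrow> g i j \<in> Ap p"
    and id: "Ap_is_id p k (Ap_matmul p K g f)" by (auto simp: Ap_mat_def)
  have nfb: "bnd (nf h)" if "h \<in> Ap p" for h
    unfolding nf_def by (rule Ap_ser(2)[OF that])
  have nfe: "h = ser p (nf h)" if "h \<in> Ap p" for h
    unfolding nf_def by (rule Ap_ser(1)[OF that])
  define F where "F = (\<lambda>n i j. nf (f i j) n)"
  define Gm where "Gm = (\<lambda>n i j. nf (g i j) n)"
  obtain M1 where M1: "M1 \<ge> 0" "\<forall>x\<in>{..<K}\<times>{..<k}. \<forall>n. norm (nf (f (fst x) (snd x)) n) \<le> M1"
    using fin_bound[of "{..<K}\<times>{..<k}" "\<lambda>x. nf (f (fst x) (snd x))"] fA nfb by auto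
  obtain M2 where M2: "M2 \<ge> 0" "\<forall>x\<in>{..<k}\<times>{..<K}. \<forall>n. norm (nf (g (fst x) (snd x)) n) \<le> M2"
    using fin_bound[of "{..<k}\<times>{..<K}" "\<lambda>x. nf (g (fst x) (snd x))"] gA nfb by auto
  define M where "M = max M1 M2"
  have M0: "M \<ge> 0" unfolding M_def using M1 by simp
  have Fb: "\<forall>i<K. \<forall>j<k. norm (F n i j) \<le> M" for n
    using M1 unfolding F_def M_def by (auto simp: le_max_iff_disj)
  have Gb: "\<forall>i<k. \<forall>j<K. norm (Gm n i j) \<le> M" for n
    using M2 unfolding Gm_def M_def by (auto simp: le_max_iff_disj)
  have GF: "\<forall>i<k. \<forall>j<k. mm K (Gm n) (F n) i j = idm i j" for n
  proof (intro allI impI)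
    fix i j assume i: "i < k" and j: "j < k"
    have "ser p (\<lambda>n. \<Sum>l<K. nf (g i l) n * nf (f l j) n) = Ap_matmul p K g f i j"
      by (rule MM[symmetric]) (use gA fA i j kK in auto)
    also have "\<dots> = ser p (\<lambda>_. idm i j)"
      using id i j unfolding Ap_is_id_def ser_idm by simp
    finally have "ser p (\<lambda>n. \<Sum>l<K. nf (g i l) n * nf (f l j) n) = ser p (\<lambda>_. idm i j)" .
    moreover have "bnd (\<lambda>n. \<Sum>l<K. nf (g i l) n * nf (f l j) n)"
      by (intro bnd_sum bnd_mult nfb) (use gA fA i j kK in auto)
    ultimately have "(\<Sum>l<K. nf (g i l) n * nf (f l j) n) = idm i j"
      using ser_inj[OF _ bnd_const] by blast
    then show "mm K (Gm n) (F n) i j = idm i j" unfolding mm_def Gm_def F_def .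
  qed
  obtain C where LAC: "\<forall>F Gm. (\<forall>i<K. \<forall>j<k. norm (F i j) \<le> M) \<and> (\<forall>i<k. \<forall>j<K. norm (Gm i j) \<le> M)
     \<and> (\<forall>i<k. \<forall>j<k. mm K Gm F i j = idm i j) \<longrightarrow>
     (\<exists>U V. bndm K U C \<and> bndm K V C \<and> eqK K (mm K U V) idm \<and> eqK K (mm K V U) idm
        \<and> (\<forall>i<K. \<forall>j<k. U i j = F i j))"
    using LA[OF less_imp_le[OF kK] M0] by blast
  have "\<forall>n. \<exists>UV. bndm K (fst UV) C \<and> bndm K (snd UV) C \<and> eqK K (mm K (fst UV) (snd UV)) idm
      \<and> eqK K (mm K (snd UV) (fst UV)) idm \<and> (\<forall>i<K. \<forall>j<k. fst UV i j = F n i j)"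
  proof
    fix n
    from LAC[rule_format, of "F n" "Gm n"] Fb GF Gb obtain U V where
      "bndm K U C \<and> bndm K V C \<and> eqK K (mm K U V) idm \<and> eqK K (mm K V U) idm
        \<and> (\<forall>i<K. \<forall>j<k. U i j = F n i j)" by blast
    then show "\<exists>UV. bndm K (fst UV) C \<and> bndm K (snd UV) C \<and> eqK K (mm K (fst UV) (snd UV)) idm
      \<and> eqK K (mm K (snd UV) (fst UV)) idm \<and> (\<forall>i<K. \<forall>j<k. fst UV i j = F n i j)"
      by (intro exI[of _ "(U, V)"]) simp
  qed
  from choice[OF this] obtain UV where UVp: "\<And>n. bndm K (fst (UV n)) C \<and> bndm K (snd (UV n)) C
      \<and> eqK K (mm K (fst (UV n)) (snd (UV n))) idm
      \<and> eqK K (mm K (snd (UV n)) (fst (UV n))) idm \<and> (\<forall>i<K. \<forall>j<k. fst (UV n) i j = F n i j)" by blast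
  define U where "U = (\<lambda>n. fst (UV n))"
  define V where "V = (\<lambda>n. snd (UV n))"
  have Ub: "bnd (\<lambda>n. U n i j)" if "i < K" "j < K" for i j
    using UVp that unfolding U_def bndm_def bnd_def by blast
  have Vb: "bnd (\<lambda>n. V n i j)" if "i < K" "j < K" for i j
    using UVp that unfolding V_def bndm_def bnd_def by blast
  have VU: "mm K (V n) (U n) i j = idm i j" if "i < K" "j < K" for i j n
    using UVp that unfolding U_def V_def eqK_def by blast
  have UF: "U n i j = F n i j" if "i < K" "j < k" for i j n
    using UVp that unfolding U_def by blast
  define fc where "fc = (\<lambda>i j. ser p (\<lambda>n. U n i (k + j)))"
  define G where "G = (\<lambda>i j. ser p (\<lambda>n. V n i j))"
  have hc: "hcat k f fc l j = ser p (\<lambda>n. U n l j)" if "l < K" "j < K" for l j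
  proof (cases "j < k")
    case True
    have "(\<lambda>n. U n l j) = nf (f l j)" using UF[OF that(1) True] unfolding F_def by auto
    then show ?thesis unfolding hcat_def using True nfe[OF fA[OF that(1) True]] by simp
  next
    case False
    then show ?thesis unfolding hcat_def fc_def by simp
  qed
  show "\<exists>fc G. Ap_mat p K (K - k) fc \<and> Ap_mat p K K G \<and> Ap_is_id p K (Ap_matmul p K G (hcat k f fc))"
  proof (rule exI[of _ fc], rule exI[of _ G], intro conjI)
    show "Ap_mat p K (K - k) fc" unfolding Ap_mat_def fc_def
      by (auto intro!: ser_Ap Ub)
    show "Ap_mat p K K G" unfolding Ap_mat_def G_def
      by (auto intro!: ser_Ap Vb)
    show "Ap_is_id p K (Ap_matmul p K G (hcat k f fc))"
      unfolding Ap_is_id_def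
    proof (intro allI impI)
      fix i j assume i: "i < K" and j: "j < K"
      have "Ap_matmul p K G (hcat k f fc) i j
          = (\<lambda>z. \<Sum>l<K. hmul p (ser p (\<lambda>n. V n i l)) (ser p (\<lambda>n. U n l j)) z)"
        unfolding Ap_matmul_def G_def by (intro ext sum.cong refl) (simp add: hc j)
      also have "\<dots> = ser p (\<lambda>n. \<Sum>l<K. V n i l * U n l j)"
        by (rule MM2) (auto intro: Ub Vb i j)
      also have "\<dots> = ser p (\<lambda>_. idm i j)"
        using VU[OF i j] unfolding mm_def by simp
      finally show "Ap_matmul p K G (hcat k f fc) i j = (if i = j then Ap_unit p else (\<lambda>_. 0))"
        unfolding ser_idm .
    qed
  qed
qed

end


theorem mainTheorem3:
  fixes p :: "nat \<Rightarrow> real"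
  assumes ppos: "\<And>n. p n > 0"
    and pgrowth: "filterlim (\<lambda>n. root n (p n)) at_top sequentially"
  shows "\<forall>k K f g. 0 < k \<and> k < K \<and> Ap_mat p K k f \<and> Ap_mat p k K g
            \<and> Ap_is_id p k (Ap_matmul p K g f) \<longrightarrow>
          (\<exists>fc G. Ap_mat p K (K - k) fc \<and> Ap_mat p K K G
            \<and> Ap_is_id p K (Ap_matmul p K G (hcat k f fc)))"
proof -
  interpret pp p by unfold_locales (fact ppos, fact pgrowth)
  show ?thesis by (rule main)
qed

end
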